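(* Let $\mathcal{I}$ be an ideal on $\omega$, let $\mathcal{A}=\{A_\alpha:\alpha<\mathfrak{c}\}$ be an almost disjoint family on $\omega$, let $\mathcal{I}^+=\{B_\alpha:\alpha<\mathfrak{c}\}$ be an enumeration, and let $\{P_n:n\in\omega\}$ be a partition of $\omega$ with $P_n\in\mathcal{I}$ for all $n$. Let $\rho^{(\mathcal{I})}$ be the associated function. Then: (1) $\rho^{(\mathcal{I})}$ is partition regular; (2) $\mathcal{I}_{\rho^{(\mathcal{I})}}=\mathcal{I}$; (3) $\rho^{(\mathcal{I})}$ has small accretions; (4) if $\mathcal{I}\in P^-$, then $\rho^{(\mathcal{I})}\in P^-$; (5) $\rho^{(\mathcal{I})}\in(S_2)$.
   Context: An ideal on $\omega$: $\mathcal{I}\subseteq\mathcal{P}(\omega)$ with $\emptyset\in\mathcal{I}$, $\omega\notin\mathcal{I}$, closed under finite unions and subsets, containing all finite sets; $\mathcal{I}^+=\mathcal{P}(\omega)\setminus\mathcal{I}$. An almost disjoint family on $\omega$ is a family of infinite subsets of $\omega$ any two distinct members of which have finite intersection (here the $A_\alpha$ are pairwise distinct). Definition of $\rho^{(\mathcal{I})}$: let $\overline{\mathcal{A}}=\{A\setminus K:A\in\mathcal{A},K\in[\omega]^{<\omega}\}$ and define $\rho^{(\mathcal{I})}\colon\overline{\mathcal{A}}\to[\omega]^\omega$ by $\rho^{(\mathcal{I})}(A_\alpha\setminus K)=B_\alpha\setminus\bigcup\{P_n:n<\max(K\cap A_\alpha)\}$, with the convention $\max\emptyset=0$. Partition regular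 function: $\Lambda,\Omega$ countably infinite, $\mathcal{F}$ a nonempty family of infinite subsets of $\Omega$ with $F\setminus K\in\mathcal{F}$ for $F\in\mathcal{F}$, $K$ finite; $\rho\colon\mathcal{F}\to[\Lambda]^\omega$ is partition regular if (M) $E\subseteq F\Rightarrow\rho(E)\subseteq\rho(F)$; (R) if $F\in\mathcal{F}$ and $\rho(F)=A\cup B$ then some $E\in\mathcal{F}$ has $\rho(E)\subseteq A$ or $\rho(E)\subseteq B$; (S) for every $E\in\mathcal{F}$ there is $F\in\mathcal{F}$, $F\subseteq E$, such that every $a\in\rho(F)$ satisfies $a\notin\rho(F\setminus K)$ for some finite $K\subseteq\Omega$. $\mathcal{I}_\rho=\{A\subseteq\Lambda:\forall F\in\mathcal{F}\ \rho(F)\not\subseteq A\}$. $\rho$ has small accretions if for every $E\in\mathcal{F}$ there is $F\in\mathcal{F}$, $F\subseteq E$, with $\rho(F)\setminus\rho(F\setminus K)\in\mathcal{I}_\rho$ for every finite $K\subseteq\Omega$. $\rho\in P^-$: for every decreasing $A_0\supseteq A_1\supseteq\dots$ of subsets of $\Lambda$ with $A_0\notin\mathcal{I}_\rho$ and $A_n\setminus A_{n+1}\in\mathcal{I}_\rho$, there is $F\in\mathcal{F}$ with $\rho(F)\subseteq A_0$ such that for each $n$ some finite $K\subseteq\Omega$ has $\rho(F\setminus K)\subseteq A_n$. For an ideal $\mathcal{I}$, $\mathcal{I}\in P^-$ means $\rho_{\mathcal{I}}\in P^-$, where $\rho_{\mathcal{I}}\colon\mathcal{I}^+\to[\omega]^\omega$,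 $\rho_{\mathcal{I}}(A)=A$; equivalently, for every decreasing $A_0\supseteq A_1\supseteq\dots$ with $A_0\in\mathcal{I}^+$ and $A_n\setminus A_{n+1}\in\mathcal{I}$ there is $B\in\mathcal{I}^+$, $B\subseteq A_0$, with $B\setminus A_n$ finite for all $n$. $\rho\in(S_2)$: for every $E\in\mathcal{F}$ there is $F\in\mathcal{F}$, $F\subseteq E$, such that for every $B\subseteq\rho(F)$ with $B\notin\mathcal{I}_\rho$ there is $G\in\mathcal{F}$ with $\rho(G)\subseteq B$ and for every finite $K\subseteq\Omega$ there is a finite $L\subseteq\Omega$ with $\rho(G\setminus L)\subseteq\rho(F\setminus K)$. *)

theory Defs
  imports Main
begin

definition is_ideal :: "nat set set \<Rightarrow> bool" where
  "is_ideal I \<longleftrightarrow> {} \<in> I \<and> UNIV \<notin> I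
     \<and> (\<forall>X\<in>I. \<forall>Y\<in>I. X \<union> Y \<in> I)
     \<and> (\<forall>X\<in>I. \<forall>Y. Y \<subseteq> X \<longrightarrow> Y \<in> I)
     \<and> (\<forall>X. finite X \<longrightarrow> X \<in> I)"

definition almost_disjoint_family :: "('k \<Rightarrow> nat set) \<Rightarrow> bool" where
  "almost_disjoint_family A \<longleftrightarrow> inj A \<and> (\<forall>a. infinite (A a))
     \<and> (\<forall>a b. a \<noteq> b \<longrightarrow> finite (A a \<inter> A b))"

definition is_partition_seq :: "(nat \<Rightarrow> nat set) \<Rightarrow> bool" where
  "is_partition_seq P \<longleftrightarrow> (\<forall>n. P n \<noteq> {}) \<and> (\<forall>m n. m \<noteq> n \<longrightarrow> P m \<inter> P n = {})
     \<and> (\<Union>n. P n) = UNIV"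

definition maxz :: "nat set \<Rightarrow> nat" where
  "maxz K = (if K = {} then 0 else Max K)"

definition Abar :: "('k \<Rightarrow> nat set) \<Rightarrow> nat set set" where
  "Abar A = {A a - K | a K. finite K}"

definition rhoI :: "('k \<Rightarrow> nat set) \<Rightarrow> ('k \<Rightarrow> nat set) \<Rightarrow> (nat \<Rightarrow> nat set) \<Rightarrow> nat set \<Rightarrow> nat set" where
  "rhoI A B P F = (SOME Y. \<exists>a K. finite K \<and> F = A a - K \<and>
      Y = B a - \<Union>{P n | n. n < maxz (K \<inter> A a)})"

definition partition_regular :: "'o set set \<Rightarrow> ('o set \<Rightarrow> 'l set) \<Rightarrow> bool" where
  "partition_regular Fam rho \<longleftrightarrow>
     Fam \<noteq> {} \<and> (\<forall>F\<in>Fam. infinite F) \<and> (\<forall>F\<in>Fam. \<forall>K. finite K \<longrightarrow> F - K \<in> Fam)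
     \<and> (\<forall>F\<in>Fam. infinite (rho F))
     \<and> (\<forall>E\<in>Fam. \<forall>F\<in>Fam. E \<subseteq> F \<longrightarrow> rho E \<subseteq> rho F)
     \<and> (\<forall>F\<in>Fam. \<forall>X Y. rho F = X \<union> Y \<longrightarrow> (\<exists>E\<in>Fam. rho E \<subseteq> X \<or> rho E \<subseteq> Y))
     \<and> (\<forall>E\<in>Fam. \<exists>F\<in>Fam. F \<subseteq> E \<and>
          (\<forall>x\<in>rho F. \<exists>K. finite K \<and> x \<notin> rho (F - K)))"

definition I_rho :: "'o set set \<Rightarrow> ('o set \<Rightarrow> 'l set) \<Rightarrow> 'l set set" where
  "I_rho Fam rho = {X. \<forall>F\<in>Fam. \<not> rho F \<subseteq> X}"

definition small_accretions :: "'o set set \<Rightarrow> ('o set \<Rightarrow> 'l set) \<Rightarrow> bool" where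
  "small_accretions Fam rho \<longleftrightarrow> (\<forall>E\<in>Fam. \<exists>F\<in>Fam. F \<subseteq> E \<and>
      (\<forall>K. finite K \<longrightarrow> rho F - rho (F - K) \<in> I_rho Fam rho))"

definition P_minus :: "'o set set \<Rightarrow> ('o set \<Rightarrow> 'l set) \<Rightarrow> bool" where
  "P_minus Fam rho \<longleftrightarrow> (\<forall>X :: nat \<Rightarrow> 'l set.
      (\<forall>n. X (Suc n) \<subseteq> X n) \<and> X 0 \<notin> I_rho Fam rho
      \<and> (\<forall>n. X n - X (Suc n) \<in> I_rho Fam rho)
      \<longrightarrow> (\<exists>F\<in>Fam. rho F \<subseteq> X 0 \<and> (\<forall>n. \<exists>K. finite K \<and> rho (F - K) \<subseteq> X n)))"

text \<open>An ideal I is in P^- iff rho_I : I^+ \<rightarrow> [omega]^omega, rho_I(A) = A, is in P^-.\<close>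
definition ideal_P_minus :: "nat set set \<Rightarrow> bool" where
  "ideal_P_minus I \<longleftrightarrow> P_minus (UNIV - I) (\<lambda>X. X)"

definition S2 :: "'o set set \<Rightarrow> ('o set \<Rightarrow> 'l set) \<Rightarrow> bool" where
  "S2 Fam rho \<longleftrightarrow> (\<forall>E\<in>Fam. \<exists>F\<in>Fam. F \<subseteq> E \<and>
      (\<forall>Y. Y \<subseteq> rho F \<and> Y \<notin> I_rho Fam rho \<longrightarrow>
         (\<exists>G\<in>Fam. rho G \<subseteq> Y \<and>
            (\<forall>K. finite K \<longrightarrow> (\<exists>L. finite L \<and> rho (G - L) \<subseteq> rho (F - K))))))"

end

theory Submission
  imports Defs "HOL-Library.Infinite_Set"
begin

locale prop52 =
  fixes I :: "nat set set" and A B :: "'k \<Rightarrow> nat set" and P :: "nat \<Rightarrow> nat set"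
  assumes ideal: "is_ideal I" and adf: "almost_disjoint_family A"
    and bij: "bij_betw B UNIV (UNIV - I)" and part: "is_partition_seq P"
    and PI: "\<forall>n. P n \<in> I"
begin

abbreviation U :: "nat \<Rightarrow> nat set" where "U m \<equiv> \<Union>{P n | n. n < m}"
abbreviation rho where "rho \<equiv> rhoI A B P"

lemma I_sub: "X \<in> I \<Longrightarrow> Y \<subseteq> X \<Longrightarrow> Y \<in> I"
  using ideal unfolding is_ideal_def by blast
lemma I_un: "X \<in> I \<Longrightarrow> Y \<in> I \<Longrightarrow> X \<union> Y \<in> I"
  using ideal unfolding is_ideal_def by blast
lemma I_fin: "finite X \<Longrightarrow> X \<in> I"
  using ideal unfolding is_ideal_def by blast

lemma U_I: "U m \<in> I"
proof (induction m)
  case 0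
  have "U 0 = {}" by simp
  then show ?case using I_fin by simp
next
  case (Suc m)
  have eq: "U (Suc m) = U m \<union> P m" by (auto simp: less_Suc_eq)
  show ?case unfolding eq using Suc PI I_un by blast
qed

lemma U_mono: "m \<le> m' \<Longrightarrow> U m \<subseteq> U m'" by (blast intro: less_le_trans)

lemma B_pos: "B a \<notin> I" using bij by (auto simp: bij_betw_def)
lemma B_surj: "X \<notin> I \<Longrightarrow> \<exists>c. B c = X" using bij unfolding bij_betw_def by (metis DiffI UNIV_I rangeE)

lemma BU_pos: "B a - U m \<notin> I"
proof
  assume "B a - U m \<in> I"
  then have "(B a - U m) \<union> U m \<in> I" using U_I I_un by blast
  then have "B a \<in> I" using I_sub by blast
  then show False using B_pos by blast
qed

lemma A_inf: "infinite (A a)" using adf unfolding almost_disjoint_family_def by blast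

lemma A_eq: "finite K \<Longrightarrow> A a - K \<subseteq> A b - K' \<Longrightarrow> a = b"
proof (rule ccontr)
  assume f: "finite K" and s: "A a - K \<subseteq> A b - K'" and ne: "a \<noteq> b"
  have "finite (A a \<inter> A b)" using adf ne unfolding almost_disjoint_family_def by blast
  moreover have "A a - K \<subseteq> A a \<inter> A b" using s by blast
  ultimately have "finite (A a - K)" using finite_subset by blast
  then show False using f A_inf by simp
qed

lemma maxz_mono: "finite K' \<Longrightarrow> K \<subseteq> K' \<Longrightarrow> maxz K \<le> maxz K'"
  unfolding maxz_def by (auto intro: Max_mono)

lemma maxz_single: "maxz {k} = k" unfolding maxz_def by simp

lemma rho_eq: "finite K \<Longrightarrow> rho (A a - K) = B a - U (maxz (K \<inter> A a))"
  unfolding rhoI_def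
proof (rule some_equality)
  assume "finite K"
  then show "\<exists>a' K'. finite K' \<and> A a - K = A a' - K' \<and> B a - U (maxz (K \<inter> A a)) = B a' - U (maxz (K' \<inter> A a'))"
    by blast
next
  fix Y assume fK: "finite K" and "\<exists>a' K'. finite K' \<and> A a - K = A a' - K' \<and> Y = B a' - U (maxz (K' \<inter> A a'))"
  then obtain a' K' where h: "finite K'" "A a - K = A a' - K'" "Y = B a' - U (maxz (K' \<inter> A a'))" by blast
  have "a = a'" using A_eq[OF fK] h(2) by blast
  moreover have "K' \<inter> A a = K \<inter> A a" using h(2) \<open>a = a'\<close> by blast
  ultimately show "Y = B a - U (maxz (K \<inter> A a))" using h(3) by simp
qed

lemma rho0: "rho (A c) = B c"
  using rho_eq[of "{}" c] by (simp add: maxz_def)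

lemma rho_minus: "finite K0 \<Longrightarrow> finite K \<Longrightarrow> rho (A a - K0 - K) = B a - U (maxz ((K0 \<union> K) \<inter> A a))"
proof -
  assume "finite K0" "finite K"
  have "A a - K0 - K = A a - (K0 \<union> K)" by blast
  then show ?thesis using rho_eq[of "K0 \<union> K" a] \<open>finite K0\<close> \<open>finite K\<close> by simp
qed

lemma rho_single: "k \<in> A c \<Longrightarrow> rho (A c - {k}) = B c - U k"
proof -
  assume k: "k \<in> A c"
  have e: "{k} \<inter> A c = {k}" using k by blast
  have r: "rho (A c - {k}) = B c - U (maxz ({k} \<inter> A c))" by (rule rho_eq) simp
  show ?thesis unfolding r e maxz_single ..
qed

lemma Abar_iff: "F \<in> Abar A \<longleftrightarrow> (\<exists>a K. finite K \<and> F = A a - K)"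
  by (auto simp: Abar_def)

lemma A_in: "finite K \<Longrightarrow> A c - K \<in> Abar A"
  unfolding Abar_def by blast

lemma A_in0: "A c \<in> Abar A"
  using A_in[of "{}" c] by simp

lemma bex_self: "E \<in> S \<Longrightarrow> Q E \<Longrightarrow> \<exists>F\<in>S. F \<subseteq> E \<and> Q F"
  by blast

lemma large: "\<exists>k\<in>A a. m \<le> k"
  using A_inf[of a] unfolding infinite_nat_iff_unbounded_le by blast

lemma big: "k \<in> A a \<Longrightarrow> finite K \<Longrightarrow> k \<in> K \<Longrightarrow> k \<le> maxz (K \<inter> A a)"
  using maxz_mono[of "K \<inter> A a" "{k}"] maxz_single by auto

lemma P_cover: "\<exists>j. x \<in> P j" using part unfolding is_partition_seq_def by blast

lemma fin_cover: "finite K \<Longrightarrow> \<exists>m. K \<subseteq> U m"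
proof (induction K rule: finite_induct)
  case empty then show ?case by blast
next
  case (insert x K)
  then obtain m where m: "K \<subseteq> U m" by blast
  obtain j where j: "x \<in> P j" using P_cover by blast
  have "K \<subseteq> U (max m (Suc j))" using m U_mono[of m "max m (Suc j)"] by auto
  moreover have "j < max m (Suc j)" by simp
  then have "x \<in> U (max m (Suc j))" using j by blast
  ultimately show ?case by blast
qed

lemma rho_pos: "F \<in> Abar A \<Longrightarrow> rho F \<notin> I"
  using rho_eq BU_pos by (auto simp: Abar_iff)

lemma I_rho_eq: "I_rho (Abar A) rho = I"
proof (rule set_eqI)
  fix X
  show "X \<in> I_rho (Abar A) rho \<longleftrightarrow> X \<in> I"
  proof
    assume X: "X \<in> I_rho (Abar A) rho"
    show "X \<in> I"
    proof (rule ccontr)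
      assume "X \<notin> I"
      then obtain c where "B c = X" using B_surj by blast
      moreover have "A c \<in> Abar A" by (rule A_in0)
      ultimately show False using X rho0[of c] unfolding I_rho_def by auto
    qed
  next
    assume "X \<in> I"
    then show "X \<in> I_rho (Abar A) rho" unfolding I_rho_def using rho_pos I_sub by blast
  qed
qed

lemma I_rho_id: "I_rho (UNIV - I) (\<lambda>X. X) = I"
  unfolding I_rho_def using I_sub by blast

lemma part1: "partition_regular (Abar A) rho"
  unfolding partition_regular_def
proof (intro conjI)
  show "Abar A \<noteq> {}" using A_in0 by blast
  show "\<forall>F\<in>Abar A. infinite F"
  proof
    fix F assume "F \<in> Abar A"
    then obtain a K0 where "finite K0" "F = A a - K0" by (auto simp: Abar_iff)
    then show "infinite F" using A_inf[of a] by simp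
  qed
  show "\<forall>F\<in>Abar A. \<forall>K. finite K \<longrightarrow> F - K \<in> Abar A"
  proof (intro ballI allI impI)
    fix F K assume "F \<in> Abar A" "finite (K::nat set)"
    then obtain a K0 where "finite K0" "F = A a - K0" by (auto simp: Abar_iff)
    then have "finite (K0 \<union> K) \<and> F - K = A a - (K0 \<union> K)" using \<open>finite K\<close> by blast
    then show "F - K \<in> Abar A" using A_in by simp
  qed
  show "\<forall>F\<in>Abar A. infinite (rho F)" using rho_pos I_fin by blast
  show "\<forall>E\<in>Abar A. \<forall>F\<in>Abar A. E \<subseteq> F \<longrightarrow> rho E \<subseteq> rho F"
  proof (intro ballI impI)
    fix E F assume "E \<in> Abar A" "F \<in> Abar A" "E \<subseteq> F"
    then obtain a K b K' where h: "finite K" "E = A a - K" "finite K'" "F = A b - K'"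
      by (auto simp: Abar_iff)
    have ab: "a = b" using A_eq[OF h(1), of a b K'] h(2,4) \<open>E \<subseteq> F\<close> by simp
    have "A a - K \<subseteq> A a - K'" using \<open>E \<subseteq> F\<close> unfolding h(2) h(4) ab .
    then have "K' \<inter> A a \<subseteq> K \<inter> A a" by blast
    then have "maxz (K' \<inter> A a) \<le> maxz (K \<inter> A a)" by (rule maxz_mono[rotated]) (use h(1) in simp)
    then have u: "U (maxz (K' \<inter> A a)) \<subseteq> U (maxz (K \<inter> A a))" by (rule U_mono)
    have e: "rho E = B a - U (maxz (K \<inter> A a))" unfolding h(2) by (rule rho_eq[OF h(1)])
    have f: "rho F = B a - U (maxz (K' \<inter> A a))" unfolding h(4) ab by (rule rho_eq[OF h(3)])
    have d: "B a - U (maxz (K \<inter> A a)) \<subseteq> B a - U (maxz (K' \<inter> A a))"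
      by (rule Diff_mono[OF order_refl u])
    show "rho E \<subseteq> rho F" unfolding e f by (rule d)
  qed
  show "\<forall>F\<in>Abar A. \<forall>X Y. rho F = X \<union> Y \<longrightarrow> (\<exists>E\<in>Abar A. rho E \<subseteq> X \<or> rho E \<subseteq> Y)"
  proof (intro ballI allI impI)
    fix F X Y assume F: "F \<in> Abar A" and eq: "rho F = X \<union> Y"
    have "X \<notin> I \<or> Y \<notin> I" using rho_pos[OF F] I_un[of X Y] unfolding eq by blast
    then obtain c where c: "B c = X \<or> B c = Y" using B_surj by blast
    have "rho (A c) \<subseteq> X \<or> rho (A c) \<subseteq> Y" unfolding rho0 using c by blast
    then show "\<exists>E\<in>Abar A. rho E \<subseteq> X \<or> rho E \<subseteq> Y" using A_in0[of c] by blast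
  qed
  show "\<forall>E\<in>Abar A. \<exists>F\<in>Abar A. F \<subseteq> E \<and> (\<forall>x\<in>rho F. \<exists>K. finite K \<and> x \<notin> rho (F - K))"
  proof
    fix E assume E: "E \<in> Abar A"
    then obtain a K0 where h: "finite K0" "E = A a - K0" by (auto simp: Abar_iff)
    have "\<forall>x\<in>rho E. \<exists>K. finite K \<and> x \<notin> rho (E - K)"
    proof
      fix x assume "x \<in> rho E"
      obtain j where j: "x \<in> P j" using P_cover by blast
      obtain k where k: "k \<in> A a" "Suc j \<le> k" using large by blast
      have "k \<le> maxz ((K0 \<union> {k}) \<inter> A a)" by (rule big) (use k h in auto)
      then have "j < maxz ((K0 \<union> {k}) \<inter> A a)" using k by linarith
      then have "x \<in> U (maxz ((K0 \<union> {k}) \<inter> A a))" using j by blast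
      moreover have "rho (E - {k}) = B a - U (maxz ((K0 \<union> {k}) \<inter> A a))"
        unfolding h(2) by (rule rho_minus[OF h(1)]) simp
      ultimately have "x \<notin> rho (E - {k})" by blast
      then have "finite {k} \<and> x \<notin> rho (E - {k})" by (intro conjI finite.insertI finite.emptyI)
      then show "\<exists>K. finite K \<and> x \<notin> rho (E - K)" by (rule exI)
    qed
    then show "\<exists>F\<in>Abar A. F \<subseteq> E \<and> (\<forall>x\<in>rho F. \<exists>K. finite K \<and> x \<notin> rho (F - K))"
      by (rule bex_self[OF E])
  qed
qed

lemma part3: "small_accretions (Abar A) rho"
  unfolding small_accretions_def I_rho_eq
proof
  fix E assume E: "E \<in> Abar A"
  then obtain a K0 where h: "finite K0" "E = A a - K0" by (auto simp: Abar_iff)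
  have "\<forall>K. finite K \<longrightarrow> rho E - rho (E - K) \<in> I"
  proof (intro allI impI)
    fix K :: "nat set" assume K: "finite K"
    have "rho E - rho (E - K) \<subseteq> U (maxz ((K0 \<union> K) \<inter> A a))"
      using rho_minus[OF h(1) K, of a] rho_eq[OF h(1), of a] h by auto
    then show "rho E - rho (E - K) \<in> I" using U_I I_sub by blast
  qed
  then show "\<exists>F\<in>Abar A. F \<subseteq> E \<and> (\<forall>K. finite K \<longrightarrow> rho F - rho (F - K) \<in> I)"
    by (rule bex_self[OF E])
qed

lemma part4: "ideal_P_minus I \<Longrightarrow> P_minus (Abar A) rho"
  unfolding ideal_P_minus_def P_minus_def I_rho_eq I_rho_id
proof (intro allI impI)
  fix X :: "nat \<Rightarrow> nat set"
  assume H: "\<forall>X. (\<forall>n. X (Suc n) \<subseteq> X n) \<and> X 0 \<notin> I \<and> (\<forall>n. X n - X (Suc n) \<in> I) \<longrightarrow>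
          (\<exists>F\<in>UNIV - I. F \<subseteq> X 0 \<and> (\<forall>n. \<exists>K. finite K \<and> F - K \<subseteq> X n))"
    and hx: "(\<forall>n. X (Suc n) \<subseteq> X n) \<and> X 0 \<notin> I \<and> (\<forall>n. X n - X (Suc n) \<in> I)"
  obtain Fb where Fb: "Fb \<notin> I" "Fb \<subseteq> X 0" "\<forall>n. \<exists>K. finite K \<and> Fb - K \<subseteq> X n"
    using H[rule_format, OF hx] by blast
  obtain c where c: "B c = Fb" using B_surj Fb(1) by blast
  have "A c \<in> Abar A" by (rule A_in0)
  moreover have "rho (A c) \<subseteq> X 0" using rho0 c Fb by simp
  moreover have "\<forall>n. \<exists>K. finite K \<and> rho (A c - K) \<subseteq> X n"
  proof
    fix n
    obtain K' where K': "finite K'" "Fb - K' \<subseteq> X n" using Fb(3) by blast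
    obtain m where m: "K' \<subseteq> U m" using fin_cover K' by blast
    obtain k where k: "k \<in> A c" "m \<le> k" using large by blast
    have "rho (A c - {k}) = B c - U k" using rho_single[OF k(1)] .
    also have "\<dots> \<subseteq> B c - K'" using m U_mono[OF k(2)] by (rule Diff_mono[OF order_refl order_trans])
    also have "\<dots> \<subseteq> X n" using K'(2) c by simp
    finally have "finite {k} \<and> rho (A c - {k}) \<subseteq> X n" by (intro conjI finite.insertI finite.emptyI)
    then show "\<exists>K. finite K \<and> rho (A c - K) \<subseteq> X n" by (rule exI)
  qed
  ultimately show "\<exists>F\<in>Abar A. rho F \<subseteq> X 0 \<and> (\<forall>n. \<exists>K. finite K \<and> rho (F - K) \<subseteq> X n)"
    by blast
qed

lemma part5: "S2 (Abar A) rho"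
  unfolding S2_def I_rho_eq
proof
  fix E assume E: "E \<in> Abar A"
  then obtain a K0 where h: "finite K0" "E = A a - K0" by (auto simp: Abar_iff)
  have "\<forall>Y. Y \<subseteq> rho E \<and> Y \<notin> I \<longrightarrow> (\<exists>G\<in>Abar A. rho G \<subseteq> Y \<and>
            (\<forall>K. finite K \<longrightarrow> (\<exists>L. finite L \<and> rho (G - L) \<subseteq> rho (E - K))))"
  proof (intro allI impI)
    fix Y assume Y: "Y \<subseteq> rho E \<and> Y \<notin> I"
    obtain c where c: "B c = Y" using B_surj Y by blast
    have "rho E = B a - U (maxz (K0 \<inter> A a))" unfolding h(2) by (rule rho_eq[OF h(1)])
    then have BcBa: "B c \<subseteq> B a" using Y c by blast
    have "A c \<in> Abar A" by (rule A_in0)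
    moreover have "rho (A c) \<subseteq> Y" using rho0 c by simp
    moreover have "\<forall>K. finite K \<longrightarrow> (\<exists>L. finite L \<and> rho (A c - L) \<subseteq> rho (E - K))"
    proof (intro allI impI)
      fix K :: "nat set" assume K: "finite K"
      define m where "m = maxz ((K0 \<union> K) \<inter> A a)"
      obtain k where k: "k \<in> A c" "m \<le> k" using large by blast
      have "rho (A c - {k}) = B c - U k" using rho_single[OF k(1)] .
      also have "\<dots> \<subseteq> B a - U m" by (rule Diff_mono[OF BcBa U_mono[OF k(2)]])
      also have "\<dots> = rho (E - K)" unfolding h(2) m_def by (rule rho_minus[OF h(1) K, symmetric])
      finally have "finite {k} \<and> rho (A c - {k}) \<subseteq> rho (E - K)" by (intro conjI finite.insertI finite.emptyI)
      then show "\<exists>L. finite L \<and> rho (A c - L) \<subseteq> rho (E - K)" by (rule exI)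
    qed
    ultimately show "\<exists>G\<in>Abar A. rho G \<subseteq> Y \<and>
            (\<forall>K. finite K \<longrightarrow> (\<exists>L. finite L \<and> rho (G - L) \<subseteq> rho (E - K)))" by blast
  qed
  then show "\<exists>F\<in>Abar A. F \<subseteq> E \<and> (\<forall>Y. Y \<subseteq> rho F \<and> Y \<notin> I \<longrightarrow> (\<exists>G\<in>Abar A. rho G \<subseteq> Y \<and>
            (\<forall>K. finite K \<longrightarrow> (\<exists>L. finite L \<and> rho (G - L) \<subseteq> rho (F - K)))))"
    by (rule bex_self[OF E])
qed

lemma main: "partition_regular (Abar A) (rhoI A B P)
    \<and> I_rho (Abar A) (rhoI A B P) = I
    \<and> small_accretions (Abar A) (rhoI A B P)
    \<and> (ideal_P_minus I \<longrightarrow> P_minus (Abar A) (rhoI A B P))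
    \<and> S2 (Abar A) (rhoI A B P)"
  by (intro conjI impI part1 I_rho_eq part3 part5, elim part4)

end

theorem proposition5p2:
  fixes I :: "nat set set" and A B :: "'k \<Rightarrow> nat set" and P :: "nat \<Rightarrow> nat set"
  assumes "is_ideal I"
    and "almost_disjoint_family A"
    and "bij_betw B UNIV (UNIV - I)"
    and "is_partition_seq P"
    and "\<forall>n. P n \<in> I"
  shows "partition_regular (Abar A) (rhoI A B P)
    \<and> I_rho (Abar A) (rhoI A B P) = I
    \<and> small_accretions (Abar A) (rhoI A B P)
    \<and> (ideal_P_minus I \<longrightarrow> P_minus (Abar A) (rhoI A B P))
    \<and> S2 (Abar A) (rhoI A B P)"
  using prop52.main[OF prop52.intro[OF assms]] .

end
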